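(* Let $G$ be a threshold graph with $n\ge3$ vertices and $\mathrm{seq}(G)=s_1s_2\cdots s_{n-1}$. Then $G$ is Hamiltonian if and only if $s_{n-1}=1$ and $h(s_1s_2\cdots s_{n-2})=0$.
   Context: A threshold graph on $n\ge1$ vertices is built from a base vertex $v_0$ by successively adding $v_1,\dots,v_{n-1}$, each either isolated (adjacent to no earlier vertex) or dominating (adjacent to all earlier vertices); its creation sequence $\mathrm{seq}(G)=s_1\cdots s_{n-1}$ has $s_i=1$ if $v_i$ is dominating and $s_i=0$ otherwise. For a binary string $s=s_1\cdots s_m$ and $0\le k\le m$, the $k$-th tail is $s_{m-k+1}\cdots s_m$ (empty for $k=0$); $z_k(s)$, $u_k(s)$ are the numbers of zeros and ones in it, and $h(s)=\max_{0\le k\le m}\{z_k(s)-u_k(s)\}$. *)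

theory Defs
  imports Main
begin

(* Binary strings are bool lists: True = 1 (dominating), False = 0 (isolated).
   A creation sequence s = s_1 ... s_{n-1} is the list [s_1, ..., s_{n-1}],
   so s_i = s ! (i - 1). *)

definition tail_k :: "nat \<Rightarrow> bool list \<Rightarrow> bool list" where
  "tail_k k s = drop (length s - k) s"

definition zeros :: "nat \<Rightarrow> bool list \<Rightarrow> nat" where
  "zeros k s = length (filter (\<lambda>b. \<not> b) (tail_k k s))"

definition ones :: "nat \<Rightarrow> bool list \<Rightarrow> nat" where
  "ones k s = length (filter (\<lambda>b. b) (tail_k k s))"

definition h :: "bool list \<Rightarrow> int" where
  "h s = Max {int (zeros k s) - int (ones k s) | k. k \<le> length s}"

(* Threshold graph with creation sequence s: vertices v_0,...,v_{length s}
   represented by 0..length s; for i < j, v_i v_j is an edge iff v_j is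
   dominating, i.e. s_j = 1, i.e. s ! (j - 1). *)
definition tg_vertices :: "bool list \<Rightarrow> nat set" where
  "tg_vertices s = {0..length s}"

definition tg_adj :: "bool list \<Rightarrow> nat \<Rightarrow> nat \<Rightarrow> bool" where
  "tg_adj s i j \<longleftrightarrow> i \<in> tg_vertices s \<and> j \<in> tg_vertices s \<and> i \<noteq> j \<and>
     s ! (max i j - 1)"

definition hamiltonian :: "'a set \<Rightarrow> ('a \<Rightarrow> 'a \<Rightarrow> bool) \<Rightarrow> bool" where
  "hamiltonian V E \<longleftrightarrow> (\<exists>c. distinct c \<and> set c = V \<and> length c \<ge> 3 \<and>
      (\<forall>i < length c - 1. E (c ! i) (c ! Suc i)) \<and> E (last c) (hd c))"

end

theory Submission
  imports Defs
begin


definition cnt :: "bool list \<Rightarrow> int" where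
  "cnt xs = int (length (filter (\<lambda>b. \<not> b) xs)) - int (length (filter (\<lambda>b. b) xs))"

definition A :: "bool list \<Rightarrow> nat \<Rightarrow> nat \<Rightarrow> bool" where
  "A t i j \<longleftrightarrow> i \<noteq> j \<and> t ! (max i j - 1)"

lemma cnt_snoc: "cnt (xs @ [b]) = cnt xs + (if b then -1 else 1)"
  by (simp add: cnt_def)

lemma A_snoc: "i \<le> length t \<Longrightarrow> j \<le> length t \<Longrightarrow> A (t @ [b]) i j = A t i j"
  by (auto simp: A_def nth_append max_def)

lemma A_new: "i \<le> length t \<Longrightarrow> A (t @ [True]) i (Suc (length t)) \<and> A (t @ [True]) (Suc (length t)) i"
  by (auto simp: A_def nth_append max_def)

lemma ivl: "{0..Suc n} = insert (Suc n) {0..(n::nat)}"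
  by auto

lemma cover:
  "(\<forall>j. cnt (drop j t) < int r) \<Longrightarrow> r \<ge> 1 \<Longrightarrow>
   \<exists>ps. ps \<noteq> [] \<and> length ps \<le> r \<and> distinct (concat ps) \<and> set (concat ps) = {0..length t} \<and>
        (\<forall>p\<in>set ps. p \<noteq> [] \<and> successively (A t) p)"
proof (induction t arbitrary: r rule: rev_induct)
  case Nil
  show ?case by (rule exI[of _ "[[0]]"]) (use Nil in auto)
next
  case (snoc b t)
  let ?w = "Suc (length t)"
  have dr: "drop j (t @ [b]) = (if j \<le> length t then drop j t @ [b] else [])" for j
    by auto
  have mono: "successively (A (t@[b])) p" if "successively (A t) p" "set p \<subseteq> {0..length t}" for p
    using that by (auto intro!: successively_mono[OF that(1)] simp: A_snoc subset_iff)
  show ?case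
  proof (cases b)
    case True
    have "\<forall>j. cnt (drop j t) < int (r+1)"
    proof
      fix j
      show "cnt (drop j t) < int (r+1)"
      proof (cases "j \<le> length t")
        case True
        with snoc.prems(1) have "cnt (drop j (t@[b])) < int r" by blast
        with True \<open>b\<close> show ?thesis by (simp add: dr cnt_snoc)
      qed (simp add: cnt_def)
    qed
    from snoc.IH[OF this] obtain ps where ps: "ps \<noteq> []" "length ps \<le> r+1" "distinct (concat ps)"
      "set (concat ps) = {0..length t}" "\<forall>p\<in>set ps. p \<noteq> [] \<and> successively (A t) p" by auto
    have sub: "set p \<subseteq> {0..length t}" if "p \<in> set ps" for p using ps(4) that by auto
    have wn: "?w \<notin> set (concat ps)" using ps(4) by simp
    have M: "p \<noteq> [] \<and> successively (A (t@[b])) p \<and> set p \<subseteq> {0..length t}" if "p \<in> set ps" for p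
    proof -
      have "p \<noteq> []" "successively (A t) p" using ps(5) that by auto
      moreover have "set p \<subseteq> {0..length t}" by (rule sub[OF that])
      ultimately show ?thesis using mono by blast
    qed
    show ?thesis
    proof (cases ps)
      case Nil with ps show ?thesis by simp
    next
      case (Cons p1 rest)
      show ?thesis
      proof (cases rest)
        case Nil
        show ?thesis
        proof (rule exI[of _ "[p1 @ [?w]]"], intro conjI)
          show "length [p1 @ [?w]] \<le> r" using snoc.prems by simp
          show "distinct (concat [p1 @ [?w]])" using ps Cons Nil wn by (auto simp: ivl)
          show "set (concat [p1 @ [?w]]) = {0..length (t @ [b])}" using ps Cons Nil wn by (auto simp: ivl)
          have "p1 \<in> set ps" using Cons \<open>ps = p1 # rest\<close> by simp
          hence "successively (A (t@[b])) p1" using M by blast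
          moreover have "A (t@[b]) (last p1) ?w"
            proof -
            have "last p1 \<in> set p1" using M[OF \<open>p1 \<in> set ps\<close>] by simp
            hence "last p1 \<le> length t" using M[OF \<open>p1 \<in> set ps\<close>] by (meson atLeastAtMost_iff subsetD)
            thus ?thesis using A_new[of "last p1" t] True by simp
          qed
          ultimately show "\<forall>p\<in>set [p1 @ [?w]]. p \<noteq> [] \<and> successively (A (t @ [b])) p"
            by (auto simp: successively_append_iff)
        qed simp
      next
        case (Cons p2 rest')
        note C = \<open>ps = p1 # rest\<close> Cons
        show ?thesis
        proof (rule exI[of _ "(p1 @ ?w # p2) # rest'"], intro conjI)
          show "length ((p1 @ ?w # p2) # rest') \<le> r" using ps C by simp
          show "distinct (concat ((p1 @ ?w # p2) # rest'))"
          proof -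
            have d: "distinct (p1 @ p2 @ concat rest')" using ps(3) C by simp
            have "?w \<notin> set (p1 @ p2 @ concat rest')" using wn C by simp
            then show ?thesis using d by auto
          qed
          show "set (concat ((p1 @ ?w # p2) # rest')) = {0..length (t @ [b])}" using ps C wn by (auto simp: ivl)
          have i1: "p1 \<in> set ps" "p2 \<in> set ps" using C by auto
          have p1: "p1 \<noteq> []" "successively (A (t@[b])) p1" "set p1 \<subseteq> {0..length t}"
            using M i1 by blast+
          have p2: "p2 \<noteq> []" "successively (A (t@[b])) p2" "set p2 \<subseteq> {0..length t}"
            using M i1 by blast+
          have "last p1 \<in> set p1" using p1 by simp
          hence "last p1 \<le> length t" using p1 by (meson atLeastAtMost_iff subsetD)
          hence a1: "A (t@[b]) (last p1) ?w" using A_new[of "last p1" t] True by simp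
          have "hd p2 \<in> set p2" using p2 by simp
          hence "hd p2 \<le> length t" using p2 by (meson atLeastAtMost_iff subsetD)
          hence a2: "A (t@[b]) ?w (hd p2)" using A_new[of "hd p2" t] True by simp
          have "successively (A (t@[b])) (p1 @ ?w # p2)"
            using p1 p2 a1 a2 by (cases p2) (auto simp: successively_append_iff)
          moreover have "\<forall>p\<in>set rest'. p \<noteq> [] \<and> successively (A (t @ [b])) p"
            using M C by auto
          ultimately show "\<forall>p\<in>set ((p1 @ ?w # p2) # rest'). p \<noteq> [] \<and> successively (A (t @ [b])) p"
            by auto
        qed simp
      qed
    qed
  next
    case False
    have r2: "r \<ge> 2" using snoc.prems(1)[rule_format, of "length t"] False by (simp add: cnt_def)
    have r1: "r - 1 \<ge> 1" using r2 by simp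
    have Q: "\<forall>j. cnt (drop j t) < int (r-1)"
    proof
      fix j
      show "cnt (drop j t) < int (r-1)"
      proof (cases "j \<le> length t")
        case True
        with snoc.prems(1) have "cnt (drop j (t@[b])) < int r" by blast
        with True False r2 show ?thesis by (simp add: dr cnt_snoc of_nat_diff)
      qed (use r2 in \<open>simp add: cnt_def\<close>)
    qed
    from snoc.IH[OF Q r1] obtain ps where ps: "ps \<noteq> []" "length ps \<le> r-1" "distinct (concat ps)"
      "set (concat ps) = {0..length t}" "\<forall>p\<in>set ps. p \<noteq> [] \<and> successively (A t) p" by auto
    have sub: "set p \<subseteq> {0..length t}" if "p \<in> set ps" for p using ps(4) that by auto
    have wn: "?w \<notin> set (concat ps)" using ps(4) by simp
    have M: "p \<noteq> [] \<and> successively (A (t@[b])) p \<and> set p \<subseteq> {0..length t}" if "p \<in> set ps" for p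
    proof -
      have "p \<noteq> []" "successively (A t) p" using ps(5) that by auto
      moreover have "set p \<subseteq> {0..length t}" by (rule sub[OF that])
      ultimately show ?thesis using mono by blast
    qed
    show ?thesis
      proof (rule exI[of _ "ps @ [[?w]]"], intro conjI)
      show "\<forall>p\<in>set (ps @ [[?w]]). p \<noteq> [] \<and> successively (A (t @ [b])) p"
        using M by auto
    qed (use ps r2 wn in \<open>auto simp: ivl\<close>)
  qed
qed



lemma h0: "h t = 0 \<longleftrightarrow> (\<forall>j. cnt (drop j t) \<le> 0)"
proof -
  let ?S = "{int (zeros k t) - int (ones k t) | k. k \<le> length t}"
  have S: "?S = (\<lambda>k. cnt (tail_k k t)) ` {..length t}"
    by (auto simp: zeros_def ones_def cnt_def)
  have fin: "finite ?S" unfolding S by simp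
  have z: "0 \<in> ?S" unfolding S by (rule image_eqI[of _ _ 0]) (auto simp: tail_k_def cnt_def)
  have "h t = 0 \<longleftrightarrow> (\<forall>x\<in>?S. x \<le> 0)"
    unfolding h_def using fin z by (metis (no_types, lifting) Max_ge Max_in empty_iff order_antisym)
  also have "\<dots> \<longleftrightarrow> (\<forall>j. cnt (drop j t) \<le> 0)"
  proof
    assume H: "\<forall>x\<in>?S. x \<le> 0"
    show "\<forall>j. cnt (drop j t) \<le> 0"
    proof
      fix j
      show "cnt (drop j t) \<le> 0"
      proof (cases "j \<le> length t")
        case True
        have "drop j t = tail_k (length t - j) t" using True by (simp add: tail_k_def)
        moreover have "cnt (tail_k (length t - j) t) \<in> ?S" unfolding S by auto
        ultimately show ?thesis using H by simp
      qed (simp add: cnt_def)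
    qed
  next
    assume H: "\<forall>j. cnt (drop j t) \<le> 0"
    show "\<forall>x\<in>?S. x \<le> 0" unfolding S using H by (auto simp: tail_k_def)
  qed
  finally show ?thesis .
qed

lemma adjD: "tg_adj s x y \<Longrightarrow> x \<noteq> y \<and> x \<le> length s \<and> y \<le> length s \<and> s ! (max x y - 1)"
  by (auto simp: tg_adj_def tg_vertices_def)

lemma suff:
  assumes m: "length s = m" "m \<ge> 2" and last: "s ! (m - 1)"
    and Hc: "\<forall>j. cnt (drop j (take (m - 1) s)) \<le> 0"
  shows "hamiltonian (tg_vertices s) (tg_adj s)"
proof -
  let ?t = "take (m - 1) s"
  have lt: "length ?t = m - 1" using m by simp
  have "\<forall>j. cnt (drop j ?t) < int 1"
  proof
    fix j show "cnt (drop j ?t) < int 1" using Hc[rule_format, of j] by linarith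
  qed
  from cover[OF this] obtain ps where ps: "ps \<noteq> []" "length ps \<le> 1" "distinct (concat ps)"
    "set (concat ps) = {0..m - 1}" "\<forall>p\<in>set ps. p \<noteq> [] \<and> successively (A ?t) p"
    using lt by auto
  obtain p where pp: "ps = [p]" using ps(1,2) by (cases ps) auto
  have p: "distinct p" "set p = {0..m-1}" "p \<noteq> []" "successively (A ?t) p"
    using ps pp by auto
  have AE: "tg_adj s x y" if "A ?t x y" "x \<le> m - 1" "y \<le> m - 1" for x y
  proof -
    have "max x y - 1 < m - 1" using that by (auto simp: A_def max_def)
    thus ?thesis using that m by (auto simp: A_def tg_adj_def tg_vertices_def)
  qed
  have Em: "tg_adj s x m \<and> tg_adj s m x" if "x \<le> m - 1" for x
    using that m last by (auto simp: tg_adj_def tg_vertices_def max_def)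
  let ?c = "p @ [m]"
  have mn: "m \<notin> set p" using p m by auto
  have lp: "length p = m" using p(1,2) distinct_card[OF p(1)] m by simp
  have sp: "successively (tg_adj s) p"
    by (rule successively_mono[OF p(4)]) (use AE p(2) in auto)
  have lastp: "last p \<le> m - 1" using p(2,3) last_in_set[OF p(3)] by auto
  have hdp: "hd p \<le> m - 1" using p(2,3) hd_in_set[OF p(3)] by auto
  have sc: "successively (tg_adj s) ?c"
    using sp Em[OF lastp] p(3) by (auto simp: successively_append_iff)
  show ?thesis unfolding hamiltonian_def
  proof (rule exI[of _ ?c], intro conjI)
    show "distinct ?c" using p mn by simp
    show "set ?c = tg_vertices s" using p m by (auto simp: tg_vertices_def)
    show "3 \<le> length ?c" using lp m by simp
    show "\<forall>i<length ?c - 1. tg_adj s (?c ! i) (?c ! Suc i)"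
      using sc unfolding successively_conv_nth by auto
    show "tg_adj s (last ?c) (hd ?c)" using Em[OF hdp] p(3) by simp
  qed
qed



lemma cyc_aux: "\<not> g a \<Longrightarrow> g b \<Longrightarrow> a < b \<Longrightarrow> \<exists>p. a \<le> p \<and> p < b \<and> \<not> g p \<and> g (Suc p)"
proof (induction b)
  case 0 then show ?case by simp
next
  case (Suc b)
  show ?case
  proof (cases "a < b")
    case True
    show ?thesis
    proof (cases "g b")
      case True with Suc \<open>a < b\<close> show ?thesis by (meson less_Suc_eq)
    next
      case False with Suc \<open>a < b\<close> show ?thesis by (intro exI[of _ b]) auto
    qed
  next
    case False
    with Suc have "a = b" by simp
    with Suc show ?thesis by (intro exI[of _ a]) auto
  qed
qed

lemma cyc:
  assumes "a < L" "\<not> f a" "b < L" "f b"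
  shows "\<exists>p<L. \<not> f p \<and> f (Suc p mod L)"
proof -
  define g where "g i = f (i mod L)" for i
  have ga: "\<not> g a" "g b" using assms by (auto simp: g_def)
  show ?thesis
  proof (cases "a < b")
    case True
    from cyc_aux[OF ga this] obtain p where "a \<le> p" "p < b" "\<not> g p" "g (Suc p)" by blast
    thus ?thesis using assms by (intro exI[of _ p]) (auto simp: g_def)
  next
    case False
    hence "b < a" using assms by (cases "a = b") auto
    show ?thesis
    proof (cases "f 0")
      case True
      hence "g L" by (simp add: g_def)
      from cyc_aux[OF ga(1) this assms(1)] obtain p where "a \<le> p" "p < L" "\<not> g p" "g (Suc p)" by blast
      thus ?thesis by (intro exI[of _ p]) (auto simp: g_def)
    next
      case False
      hence "\<not> g 0" "0 < b" using assms by (auto simp: g_def intro: Nat.gr0I)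
      from cyc_aux[OF this(1) ga(2) this(2)] obtain p where "p < b" "\<not> g p" "g (Suc p)" by blast
      thus ?thesis using assms \<open>b < a\<close> by (intro exI[of _ p]) (auto simp: g_def)
    qed
  qed
qed

lemma suc_mod_inj: "p < L \<Longrightarrow> q < L \<Longrightarrow> Suc p mod L = Suc q mod L \<Longrightarrow> p = (q::nat)"
  by (cases "Suc p = L"; cases "Suc q = L") auto

lemma cnt_card:
  assumes "a < length t"
  shows "length (filter P (drop a t)) = card {x. a < x \<and> x \<le> length t \<and> P (t ! (x - 1))}"
proof -
  have "length (filter P (drop a t)) = card {i. i < length t - a \<and> P (t ! (a + i))}"
    unfolding length_filter_conv_card by (rule arg_cong[where f=card]) (use assms in auto)
  also have "\<dots> = card ((\<lambda>i. Suc (a + i)) ` {i. i < length t - a \<and> P (t ! (a + i))})"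
    by (rule card_image[symmetric]) (auto simp: inj_on_def)
  also have "(\<lambda>i. Suc (a + i)) ` {i. i < length t - a \<and> P (t ! (a + i))} =
             {x. a < x \<and> x \<le> length t \<and> P (t ! (x - 1))}"
  proof (rule set_eqI, rule iffI)
    fix x assume "x \<in> {x. a < x \<and> x \<le> length t \<and> P (t ! (x - 1))}"
    thus "x \<in> (\<lambda>i. Suc (a + i)) ` {i. i < length t - a \<and> P (t ! (a + i))}"
      by (intro image_eqI[of _ _ "x - a - 1"]) auto
  qed auto
  finally show ?thesis .
qed

lemma card_pos:
  assumes "distinct c" "X \<subseteq> set c"
  shows "card X = card {p. p < length c \<and> c ! p \<in> X}"
proof -
  have "X = (!) c ` {p. p < length c \<and> c ! p \<in> X}"
  proof (rule set_eqI, rule iffI)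
    fix x assume "x \<in> X"
    then obtain i where "i < length c" "c ! i = x" using assms(2) by (metis in_set_conv_nth subsetD)
    thus "x \<in> (!) c ` {p. p < length c \<and> c ! p \<in> X}" using \<open>x \<in> X\<close> by force
  qed auto
  moreover have "inj_on ((!) c) {p. p < length c \<and> c ! p \<in> X}"
    using assms(1) by (auto simp: inj_on_def nth_eq_iff_index_eq)
  ultimately show ?thesis by (metis card_image)
qed

lemma nec:
  assumes m: "length s = m" "m \<ge> 2" and H: "hamiltonian (tg_vertices s) (tg_adj s)"
  shows "s ! (m - 1) \<and> (\<forall>j. cnt (drop j (take (m - 1) s)) \<le> 0)"
proof -
  obtain c where c: "distinct c" "set c = {0..m}" "length c \<ge> 3"
    "\<forall>i < length c - 1. tg_adj s (c ! i) (c ! Suc i)" "tg_adj s (last c) (hd c)"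
    using H m by (auto simp: hamiltonian_def tg_vertices_def)
  define L where "L = length c"
  have L: "L = m + 1" using distinct_card[OF c(1)] c(2) L_def by simp
  have cy: "tg_adj s (c ! p) (c ! (Suc p mod L))" if "p < L" for p
  proof (cases "p = L - 1")
    case True
    hence "Suc p mod L = 0" using that by simp
    moreover have "c ! p = last c" using True L L_def c(3) by (subst last_conv_nth) auto
    moreover have "c ! 0 = hd c" using c(3) by (subst hd_conv_nth) auto
    ultimately show ?thesis using c(5) by simp
  next
    case False
    hence "Suc p mod L = Suc p" using that by simp
    thus ?thesis using c(4) that False L_def by simp
  qed
  have inC: "x \<in> set c" if "x \<le> m" for x using c(2) that by simp
  have lastm: "s ! (m - 1)"
  proof -
    obtain p where p: "p < L" "c ! p = m" using inC[of m] by (auto simp: in_set_conv_nth L_def)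
    from adjD[OF cy[OF p(1)]] p m show ?thesis by (auto simp: max_def split: if_splits)
  qed
  have cnt_le: "cnt (drop a (take (m - 1) s)) \<le> 0" for a
  proof (cases "a < m - 1")
    case False thus ?thesis by (simp add: cnt_def)
  next
    case True
    let ?t = "take (m - 1) s"
    define I where "I = {x. a < x \<and> x \<le> m - 1 \<and> \<not> s ! (x - 1)}"
    define D0 where "D0 = {x. a < x \<and> x \<le> m - 1 \<and> s ! (x - 1)}"
    define D where "D = {x. a < x \<and> x \<le> m \<and> s ! (x - 1)}"
    have lt: "length ?t = m - 1" using m by simp
    have z: "length (filter (\<lambda>b. \<not> b) (drop a ?t)) = card I"
      proof -
      have "{x. a < x \<and> x \<le> length ?t \<and> (\<lambda>b. \<not> b) (?t ! (x - 1))} = I"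
        unfolding I_def using lt by (auto simp: nth_take)
      thus ?thesis using cnt_card[of a ?t "\<lambda>b. \<not> b"] True lt by simp
    qed
    have o: "length (filter (\<lambda>b. b) (drop a ?t)) = card D0"
      proof -
      have "{x. a < x \<and> x \<le> length ?t \<and> (\<lambda>b. b) (?t ! (x - 1))} = D0"
        unfolding D0_def using lt by (auto simp: nth_take)
      thus ?thesis using cnt_card[of a ?t "\<lambda>b. b"] True lt by simp
    qed
    have DD: "D = insert m D0" using lastm True m by (auto simp: D_def D0_def)
    have fD0: "finite D0" unfolding D0_def by (rule finite_subset[of _ "{..m}"]) auto
    have "m \<notin> D0" using m by (auto simp: D0_def)
    have cD: "card D = Suc (card D0)" unfolding DD using fD0 \<open>m \<notin> D0\<close> by simp
    define P where "P = {p. p < L \<and> c ! p \<in> I}"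
    define Q where "Q = {p. p < L \<and> c ! p \<in> D}"
    have cI: "card I = card P" unfolding P_def L_def
      by (rule card_pos[OF c(1)]) (auto simp: I_def c(2))
    have cQ: "card D = card Q" unfolding Q_def L_def
      by (rule card_pos[OF c(1)]) (auto simp: D_def c(2))
    define nx where "nx p = Suc p mod L" for p
    have nxL: "nx p < L" for p using L by (simp add: nx_def)
    have cL: "c ! p \<le> m" if "p < L" for p using c(2) that L_def nth_mem by fastforce
    have nbI: "y \<in> D" if "tg_adj s x y \<or> tg_adj s y x" "x \<in> I" for x y
    proof -
      have "x \<noteq> y \<and> y \<le> m \<and> s ! (max x y - 1)"
        using that(1) adjD[of s x y] adjD[of s y x] m by (auto simp: max.commute)
      hence "x \<noteq> y" "y \<le> m" "s ! (max x y - 1)" by auto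
      moreover have "\<not> s ! (x - 1)" "a < x" using that(2) by (auto simp: I_def)
      ultimately have "x < y" "s ! (y - 1)" by (auto simp: max_def split: if_splits)
      thus ?thesis using \<open>a < x\<close> \<open>y \<le> m\<close> by (auto simp: D_def)
    qed
    have sub: "nx ` P \<subseteq> Q"
    proof
      fix q assume "q \<in> nx ` P"
      then obtain p where p: "p \<in> P" "q = nx p" by blast
      have "c ! q \<in> D" using nbI[of "c ! p" "c ! q"] cy[of p] p by (auto simp: P_def nx_def)
      thus "q \<in> Q" using nxL p by (simp add: Q_def)
    qed
    have inj: "inj_on nx P"
    proof (rule inj_onI)
      fix p q assume "p \<in> P" "q \<in> P" "nx p = nx q"
      hence "p < L" "q < L" "Suc p mod L = Suc q mod L" by (auto simp: P_def nx_def)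
      thus "p = q" by (rule suc_mod_inj)
    qed
    obtain p0 where p0: "p0 < L" "c ! p0 = 0" using inC[of 0] by (auto simp: in_set_conv_nth L_def)
    obtain pm where pm: "pm < L" "c ! pm = m" using inC[of m] by (auto simp: in_set_conv_nth L_def)
    have "\<exists>p<L. \<not> (c ! p \<in> I \<union> D) \<and> c ! (Suc p mod L) \<in> I \<union> D"
      by (rule cyc[of p0 L _ pm]) (use p0 pm lastm True in \<open>auto simp: I_def D_def\<close>)
    then obtain p where p: "p < L" "c ! p \<notin> I" "c ! p \<notin> D" "c ! nx p \<in> I \<union> D"
      unfolding nx_def by blast
    have "c ! nx p \<notin> I"
    proof
      assume "c ! nx p \<in> I"
      hence "c ! p \<in> D" using nbI[of "c ! nx p" "c ! p"] cy[OF p(1)] by (auto simp: nx_def)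
      thus False using p by simp
    qed
    hence qQ: "nx p \<in> Q" using p nxL by (auto simp: Q_def)
    have "nx p \<notin> nx ` P"
    proof
      assume "nx p \<in> nx ` P"
      then obtain p' where "p' \<in> P" "nx p' = nx p" by (metis imageE)
      hence "p' < L" "Suc p' mod L = Suc p mod L" "c ! p' \<in> I" by (auto simp: P_def nx_def)
      hence "p' = p" using p(1) suc_mod_inj by blast
      thus False using \<open>c ! p' \<in> I\<close> p by simp
    qed
    hence "nx ` P \<subset> Q" using sub qQ by blast
    moreover have "finite Q" by (simp add: Q_def)
    ultimately have "card (nx ` P) < card Q" by (rule psubset_card_mono[rotated])
    hence "card I < card D" using cI cQ card_image[OF inj] by simp
    hence "card I \<le> card D0" using cD by simp
    thus ?thesis using z o by (simp add: cnt_def)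
  qed
  show ?thesis using lastm cnt_le by blast
qed


theorem mainTheorem8:
  fixes s :: "bool list" and n :: nat
  assumes "n \<ge> 3" and "length s = n - 1"
  shows "hamiltonian (tg_vertices s) (tg_adj s) \<longleftrightarrow>
         (s ! (n - 2) = True \<and> h (take (n - 2) s) = 0)"
proof -
  define m where "m = n - 1"
  have m: "length s = m" "m \<ge> 2" using assms by (auto simp: m_def)
  have e: "n - 2 = m - 1" by (simp add: m_def)
  show ?thesis unfolding e h0
    using nec[OF m] suff[OF m] by auto
qed

end
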